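(* Let $R>0$, $h>0$ and $\lambda>0$, and let $G_1,G_2$ be independent exponential random variables with rate $\lambda$ (representing $g_1^2,g_2^2$). For $\Delta>0$ let $$\alpha_1(\Delta)=2^R-\frac{h^2}{1+\Delta}-1,\qquad \alpha_2(\Delta)=2^R\frac{1+\Delta}{\Delta}-1,$$ and $Q(\Delta)=\Pr\{G_2\ge[\alpha_1(\Delta)]^+,\ G_1+G_2\ge\alpha_2(\Delta)\}$, where $[x]^+=\max\{x,0\}$. Let $\Delta_t=\frac{h^2}{2^R-1}-1$. Then the cubic equation $$\frac{h^2}{\lambda}\Delta^3-2^R(2^R+h^2)\Delta^2-2^R(2^{R+1}+h^2)\Delta-2^{2R}=0$$ has exactly one positive root $\Delta^\dagger$, and $\Delta^*=\max\{\Delta^\dagger,\Delta_t\}$ maximizes $Q(\Delta)$ over $\Delta>0$.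
   Context: This is the full-duplex Gaussian single-relay channel ($Y_r=\mathsf hX+Z_r$, $Y=\mathsf g_1X_r+\mathsf g_2X+Z$, unit powers and noise) under Rayleigh fading with $|\mathsf g_1|^2,|\mathsf g_2|^2$ i.i.d. exponential with rate $\lambda$, where the relay knows only the realization of its incoming channel $h=|\mathsf h|$. With Gaussian quantization distortion $\Delta$, the quantize-map-and-forward rate is $\big[\min\{\log_2(1+\frac{h^2}{1+\Delta}+g_2^2),\ \log_2(1+g_1^2+g_2^2)-\log_2\frac{1+\Delta}{\Delta}\}\big]^+$, and $Q(\Delta)$ equals one minus the outage probability at rate $R$ conditioned on $h$; so $\Delta^*$ is the outage-optimal quantizer given receiver CSI. *)

theory Defs
  imports "HOL-Probability.Probability"
begin

definition alpha1 :: "real \<Rightarrow> real \<Rightarrow> real \<Rightarrow> real" where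
  "alpha1 R h \<Delta> = 2 powr R - h\<^sup>2 / (1 + \<Delta>) - 1"

definition alpha2 :: "real \<Rightarrow> real \<Rightarrow> real" where
  "alpha2 R \<Delta> = 2 powr R * ((1 + \<Delta>) / \<Delta>) - 1"

definition Qprob :: "'a measure \<Rightarrow> ('a \<Rightarrow> real) \<Rightarrow> ('a \<Rightarrow> real) \<Rightarrow> real \<Rightarrow> real \<Rightarrow> real \<Rightarrow> real" where
  "Qprob M G1 G2 R h \<Delta> =
     measure M {\<omega> \<in> space M. G2 \<omega> \<ge> max (alpha1 R h \<Delta>) 0 \<and> G1 \<omega> + G2 \<omega> \<ge> alpha2 R \<Delta>}"

definition delta_t :: "real \<Rightarrow> real \<Rightarrow> real" where
  "delta_t R h = h\<^sup>2 / (2 powr R - 1) - 1"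

definition cubic :: "real \<Rightarrow> real \<Rightarrow> real \<Rightarrow> real \<Rightarrow> real" where
  "cubic R h lam \<Delta> = h\<^sup>2 / lam * \<Delta> ^ 3 - 2 powr R * (2 powr R + h\<^sup>2) * \<Delta>\<^sup>2
      - 2 powr R * (2 powr (R + 1) + h\<^sup>2) * \<Delta> - 2 powr (2 * R)"

end

theory Submission
  imports Defs
begin


lemma tail_gt:
  assumes l: "0 < l" and c: "0 \<le> c"
  shows "emeasure (density lborel (\<lambda>x. ennreal (exponential_density l x))) {c<..} = ennreal (exp (- l * c))"
proof -
  let ?D = "density lborel (\<lambda>x. ennreal (exponential_density l x))"
  interpret prob_space ?D using prob_space_exponential_density[OF l] .
  have "{c<..} = space ?D - {..c}" by auto
  then have "emeasure ?D {c<..} = emeasure ?D (space ?D) - emeasure ?D {..c}"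
    using emeasure_compl[of "{..c}" ?D] by simp
  also have "\<dots> = 1 - ennreal (1 - exp (- l * c))"
  proof -
    have "emeasure ?D UNIV = 1" using emeasure_space_1 by simp
    then show ?thesis
    using emeasure_erlang_density[OF l, of 0 c] c by (simp add: erlang_CDF_def)
  qed
  also have "\<dots> = ennreal (exp (- l * c))"
  proof -
    have "exp (- (l * c)) \<le> 1" using l c by simp
    then show ?thesis by (simp add: ennreal_1[symmetric] ennreal_minus del: ennreal_1)
  qed
  finally show ?thesis .
qed

lemma tail_ge:
  assumes l: "0 < l" and c: "0 \<le> c"
  shows "emeasure (density lborel (\<lambda>x. ennreal (exponential_density l x))) {c..} = ennreal (exp (- l * c))"
proof -
  let ?D = "density lborel (\<lambda>x. ennreal (exponential_density l x))"
  have "emeasure ?D {c..} = emeasure ?D {c<..}"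
  proof -
    have "emeasure ?D {c..} = (\<integral>\<^sup>+x. ennreal (exponential_density l x) * indicator {c..} x \<partial>lborel)"
      by (simp add: emeasure_density)
    also have "\<dots> = (\<integral>\<^sup>+x. ennreal (exponential_density l x) * indicator {c<..} x \<partial>lborel)"
      by (rule nn_integral_cong_AE) (use AE_lborel_singleton[of c] in \<open>auto elim!: eventually_mono split: split_indicator\<close>)
    also have "\<dots> = emeasure ?D {c<..}" by (simp add: emeasure_density)
    finally show ?thesis .
  qed
  with tail_gt[OF l c] show ?thesis by simp
qed

lemma Qformula:
  assumes P: "prob_space M" and l: "0 < l"
    and D1: "distributed M lborel G1 (exponential_density l)"
    and D2: "distributed M lborel G2 (exponential_density l)"
    and I: "prob_space.indep_var M borel G1 borel G2"
    and a: "0 \<le> a" and ab: "a \<le> b"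
  shows "measure M {\<omega> \<in> space M. G2 \<omega> \<ge> a \<and> G1 \<omega> + G2 \<omega> \<ge> b} = exp (- l * b) * (1 + l * (b - a))"
proof -
  interpret prob_space M by (rule P)
  define f where "f = (\<lambda>x. ennreal (exponential_density l x))"
  let ?D = "density lborel f"
  interpret DP: prob_space ?D unfolding f_def using prob_space_exponential_density[OF l] .
  have fm[measurable]: "f \<in> borel_measurable borel" unfolding f_def by simp
  have dd1: "distr M borel G1 = ?D"
    using distributed_distr_eq_density[OF D1] unfolding f_def
    by (metis distr_cong sets_lborel)
  have dd2: "distr M borel G2 = ?D"
    using distributed_distr_eq_density[OF D2] unfolding f_def
    by (metis distr_cong sets_lborel)
  have J: "distr M (borel \<Otimes>\<^sub>M borel) (\<lambda>x. (G1 x, G2 x)) = ?D \<Otimes>\<^sub>M ?D"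
    using I unfolding indep_var_distribution_eq dd1 dd2 by simp
  have rv1[measurable]: "G1 \<in> borel_measurable M" using distributed_measurable[OF D1] by simp
  have rv2[measurable]: "G2 \<in> borel_measurable M" using distributed_measurable[OF D2] by simp
  define A where "A = {p::real\<times>real. snd p \<ge> a \<and> fst p + snd p \<ge> b}"
  have A[measurable]: "A \<in> sets (borel \<Otimes>\<^sub>M borel)"
  proof -
    have "A = {p \<in> space (borel \<Otimes>\<^sub>M borel). a \<le> snd p \<and> b \<le> fst p + snd p}"
      by (auto simp: A_def space_pair_measure)
    also have "\<dots> \<in> sets (borel \<Otimes>\<^sub>M borel)" by measurable
    finally show ?thesis .
  qed
  have "emeasure M {\<omega> \<in> space M. G2 \<omega> \<ge> a \<and> G1 \<omega> + G2 \<omega> \<ge> b}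
      = emeasure (distr M (borel \<Otimes>\<^sub>M borel) (\<lambda>x. (G1 x, G2 x))) A"
    by (subst emeasure_distr) (use A in \<open>auto simp: A_def intro!: arg_cong[where f="emeasure M"]\<close>)
  also have "\<dots> = emeasure (?D \<Otimes>\<^sub>M ?D) A" unfolding J ..
  also have "\<dots> = (\<integral>\<^sup>+x. emeasure ?D (Pair x -` A) \<partial>?D)"
    by (rule DP.emeasure_pair_measure_alt) (use A in simp)
  also have "\<dots> = (\<integral>\<^sup>+x. ennreal (exp (- l * max a (b - x))) \<partial>?D)"
  proof (rule nn_integral_cong)
    fix x
    have "Pair x -` A = {max a (b - x)..}" by (auto simp: A_def)
    then show "emeasure ?D (Pair x -` A) = ennreal (exp (- l * max a (b - x)))"
      unfolding f_def using tail_ge[OF l, of "max a (b - x)"] a by simp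
  qed
  also have "\<dots> = (\<integral>\<^sup>+x. f x * ennreal (exp (- l * max a (b - x))) \<partial>lborel)"
    by (rule nn_integral_density) simp_all
  also have "\<dots> = (\<integral>\<^sup>+x. ennreal (l * exp (- l * b)) * indicator {0..b-a} x
                  + ennreal (exp (- l * a)) * (f x * indicator {b-a<..} x) \<partial>lborel)"
  proof (rule nn_integral_cong)
    fix x :: real
    show "f x * ennreal (exp (- l * max a (b - x))) = ennreal (l * exp (- l * b)) * indicator {0..b-a} x
                  + ennreal (exp (- l * a)) * (f x * indicator {b-a<..} x)"
    proof (cases "x < 0")
      case True then show ?thesis using ab by (simp add: f_def exponential_density_def indicator_def)
    next
      case False
      show ?thesis
      proof (cases "x \<le> b - a")
        case True
        then have "max a (b - x) = b - x" by simp
        moreover have "exp (- x * l) * exp (- l * (b - x)) = exp (- l * b)"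
          by (simp add: exp_add[symmetric] algebra_simps)
        ultimately show ?thesis using False True l
          by (simp add: f_def exponential_density_def indicator_def ennreal_mult'[symmetric] mult.assoc)
      next
        case c2: False
        then have "max a (b - x) = a" by simp
        then show ?thesis using False c2 l
          by (simp add: f_def exponential_density_def indicator_def ennreal_mult'[symmetric] mult.commute)
      qed
    qed
  qed
  also have "\<dots> = ennreal (l * exp (- l * b)) * (\<integral>\<^sup>+x. indicator {0..b-a} x \<partial>lborel)
                  + ennreal (exp (- l * a)) * (\<integral>\<^sup>+x. f x * indicator {b-a<..} x \<partial>lborel)"
    by (simp add: nn_integral_add nn_integral_cmult)
  also have "\<dots> = ennreal (l * exp (- l * b)) * ennreal (b - a) + ennreal (exp (- l * a)) * ennreal (exp (- l * (b - a)))"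
    using tail_gt[OF l, of "b - a"] ab by (simp add: emeasure_density f_def)
  also have "\<dots> = ennreal (exp (- l * b) * (1 + l * (b - a)))"
    using ab l by (simp add: ennreal_mult'[symmetric] ennreal_plus[symmetric] exp_add[symmetric] algebra_simps del: ennreal_plus)
  finally have "emeasure M {\<omega> \<in> space M. G2 \<omega> \<ge> a \<and> G1 \<omega> + G2 \<omega> \<ge> b} = ennreal (exp (- l * b) * (1 + l * (b - a)))" .
  then show ?thesis
    by (rule measure_eq_emeasure_eq_ennreal[rotated]) (use ab l in simp)
qed



definition Cp :: "real \<Rightarrow> real \<Rightarrow> real \<Rightarrow> real \<Rightarrow> real" where
  "Cp s H l x = H / l * x ^ 3 - s * (s + H) * x\<^sup>2 - s * (2 * s + H) * x - s\<^sup>2"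

definition pp :: "real \<Rightarrow> real \<Rightarrow> real \<Rightarrow> real \<Rightarrow> real" where
  "pp s H l u = H / l - s * (s + H) * u - s * (2 * s + H) * u\<^sup>2 - s\<^sup>2 * u ^ 3"

lemma Cp_pp: "x > 0 \<Longrightarrow> Cp s H l x = x ^ 3 * pp s H l (1 / x)"
  by (simp add: Cp_def pp_def field_simps power2_eq_square power3_eq_cube)

lemma pp_mono:
  assumes "0 < v" "v < u" "s > 0" "H > 0"
  shows "pp s H l u < pp s H l v"
proof -
  have "v\<^sup>2 < u\<^sup>2" using assms by (simp add: power_strict_mono)
  moreover have "v^3 < u^3" using assms by (simp add: power_strict_mono)
  moreover have "s * (s + H) * v < s * (s + H) * u" using assms by simp
  moreover have "s * (2 * s + H) * v\<^sup>2 \<le> s * (2 * s + H) * u\<^sup>2" using assms calculation(1) by simp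
  moreover have "s\<^sup>2 * v ^ 3 \<le> s\<^sup>2 * u ^ 3" using assms calculation(2) by simp
  ultimately show ?thesis unfolding pp_def by linarith
qed

lemma Cp_sign:
  assumes s: "s > 0" and H: "H > 0" and d: "d > 0" "Cp s H l d = 0"
  shows "0 < x \<Longrightarrow> x < d \<Longrightarrow> Cp s H l x < 0"
    and "d < x \<Longrightarrow> Cp s H l x > 0"
proof -
  have pd: "pp s H l (1/d) = 0" using Cp_pp[OF d(1), of s H l] d by simp
  show "Cp s H l x < 0" if "0 < x" "x < d"
  proof -
    have "pp s H l (1/x) < 0" using pp_mono[of "1/d" "1/x" s H l] pd that s H d
      by (simp add: frac_less2)
    then show ?thesis using Cp_pp[OF that(1)] that by (simp add: mult_pos_neg)
  qed
  show "Cp s H l x > 0" if "d < x"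
  proof -
    have x: "x > 0" using that d by simp
    have "pp s H l (1/x) > 0" using pp_mono[of "1/x" "1/d" s H l] pd that s H d x
      by (simp add: frac_less2)
    then show ?thesis using Cp_pp[OF x] x by simp
  qed
qed

lemma Cp_exists:
  assumes s: "s > 0" and H: "H > 0" and l: "l > 0"
  shows "\<exists>d>0. Cp s H l d = 0"
proof -
  define T where "T = 4 * s\<^sup>2 + 2 * s * H"
  define X where "X = 1 + 2 * T * l / H"
  have T: "T > 0" using s H unfolding T_def by (simp add: add_pos_pos)
  have X1: "X \<ge> 1" using T l H by (simp add: X_def)
  have XT: "X * H / l > T"
  proof -
    have "X * H / l = H / l + 2 * T" using l H by (simp add: X_def field_simps)
    then show ?thesis using H l T by (simp add: add_pos_pos)
  qed
  have "s * (s + H) * X\<^sup>2 + s * (2 * s + H) * X + s\<^sup>2 \<le> T * X\<^sup>2"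
  proof -
    have "X \<le> X\<^sup>2" using X1 by (simp add: power2_eq_square)
    moreover have "1 \<le> X\<^sup>2" using X1 by (simp add: one_le_power)
    ultimately have "s * (2 * s + H) * X \<le> s * (2 * s + H) * X\<^sup>2" "s\<^sup>2 \<le> s\<^sup>2 * X\<^sup>2"
      using s H by simp_all
    then show ?thesis unfolding T_def by (simp add: algebra_simps power2_eq_square)
  qed
  moreover have "T * X\<^sup>2 < H / l * X ^ 3"
  proof -
    have "T * X\<^sup>2 < (X * H / l) * X\<^sup>2" using mult_strict_right_mono[OF XT, of "X\<^sup>2"] X1 by simp
    then show ?thesis by (simp add: power2_eq_square power3_eq_cube field_simps)
  qed
  ultimately have CX: "Cp s H l X > 0" unfolding Cp_def by linarith
  have C0: "Cp s H l 0 < 0" using s by (simp add: Cp_def)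
  have "continuous_on {0..X} (Cp s H l)" unfolding Cp_def by (intro continuous_intros)
  then obtain d where "0 \<le> d" "d \<le> X" "Cp s H l d = 0"
    using IVT'[of "Cp s H l" 0 0 X] C0 CX X1 by auto
  moreover have "d \<noteq> 0" using C0 calculation by auto
  ultimately show ?thesis by (intro exI[of _ d]) auto
qed


definition psiF :: "real \<Rightarrow> real \<Rightarrow> real \<Rightarrow> real \<Rightarrow> real" where
  "psiF s H l x = exp (- l * (s - 1 + s / x)) * (1 + l * (s / x + H / (1 + x)))"

lemma psiF_deriv:
  assumes x: "x > 0" and l: "l > 0"
  shows "(psiF s H l has_real_derivative
     (- exp (- l * (s - 1 + s / x)) * l\<^sup>2 * Cp s H l x / (x ^ 3 * (1 + x)\<^sup>2))) (at x)"
proof -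
  have x0: "x \<noteq> 0" "1 + x \<noteq> 0" "l \<noteq> 0" using x l by auto
  show ?thesis
  unfolding psiF_def[abs_def] using x0
  apply (intro derivative_eq_intros refl)
  apply simp_all
  apply (simp add: Cp_def divide_simps)
  apply (simp add: algebra_simps power2_eq_square power3_eq_cube)
  done
qed

lemma psiF_inc:
  assumes l: "l > 0" and s: "s > 0" and H: "H > 0" and d: "d > 0" "Cp s H l d = 0"
    and xy: "0 < x" "x \<le> y" "y \<le> d"
  shows "psiF s H l x \<le> psiF s H l y"
proof (rule deriv_nonneg_imp_mono[OF _ _ xy(2)])
  fix t assume t: "t \<in> {x..y}"
  then have t0: "t > 0" using xy by auto
  show "(psiF s H l has_real_derivative
     (- exp (- l * (s - 1 + s / t)) * l\<^sup>2 * Cp s H l t / (t ^ 3 * (1 + t)\<^sup>2))) (at t)"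
    by (rule psiF_deriv[OF t0 l])
  have "Cp s H l t \<le> 0"
  proof (cases "t < d")
    case True then show ?thesis using Cp_sign(1)[OF s H d t0] by simp
  next
    case False then have "t = d" using t xy by auto
    then show ?thesis using d by simp
  qed
  then have "0 \<le> - exp (- l * (s - 1 + s / t)) * l\<^sup>2 * Cp s H l t"
    by (simp add: mult_nonneg_nonpos)
  then show "0 \<le> - exp (- l * (s - 1 + s / t)) * l\<^sup>2 * Cp s H l t / (t ^ 3 * (1 + t)\<^sup>2)"
    using t0 by (intro divide_nonneg_pos) simp_all
qed

lemma psiF_dec:
  assumes l: "l > 0" and s: "s > 0" and H: "H > 0" and d: "d > 0" "Cp s H l d = 0"
    and xy: "d \<le> x" "x \<le> y"
  shows "psiF s H l y \<le> psiF s H l x"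
proof (rule deriv_nonpos_imp_antimono[OF _ _ xy(2)])
  fix t assume t: "t \<in> {x..y}"
  then have t0: "t > 0" using xy d by auto
  show "(psiF s H l has_real_derivative
     (- exp (- l * (s - 1 + s / t)) * l\<^sup>2 * Cp s H l t / (t ^ 3 * (1 + t)\<^sup>2))) (at t)"
    by (rule psiF_deriv[OF t0 l])
  have "Cp s H l t \<ge> 0"
  proof (cases "d < t")
    case True then show ?thesis using Cp_sign(2)[OF s H d] by (simp add: less_imp_le)
  next
    case False then have "t = d" using t xy by auto
    then show ?thesis using d by simp
  qed
  then have "- exp (- l * (s - 1 + s / t)) * l\<^sup>2 * Cp s H l t \<le> 0"
    by simp
  then show "- exp (- l * (s - 1 + s / t)) * l\<^sup>2 * Cp s H l t / (t ^ 3 * (1 + t)\<^sup>2) \<le> 0"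
    using t0 by (intro divide_nonpos_pos) simp_all
qed

definition phiF :: "real \<Rightarrow> real \<Rightarrow> real" where
  "phiF l b = exp (- l * b) * (1 + l * b)"

lemma phiF_dec:
  assumes l: "l > 0" and b: "0 \<le> b1" "b1 \<le> b2"
  shows "phiF l b2 \<le> phiF l b1"
proof (rule deriv_nonpos_imp_antimono[OF _ _ b(2)])
  fix t assume t: "t \<in> {b1..b2}"
  show "(phiF l has_real_derivative (- l\<^sup>2 * t * exp (- l * t))) (at t)"
    unfolding phiF_def[abs_def]
    apply (intro derivative_eq_intros refl)
    apply simp_all
    apply (simp add: algebra_simps power2_eq_square)
    done
  show "- l\<^sup>2 * t * exp (- l * t) \<le> 0" using t b l by (simp add: mult_nonneg_nonneg)
qed

lemma cubic_aux:
  "H / l * x ^ 3 - s * (s + H) * x\<^sup>2 - s * (s * 2 + H) * x - s * s = Cp s H l x"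
  by (simp add: Cp_def power2_eq_square algebra_simps)
lemma cubic_eq:
  "cubic R h lam x = Cp (2 powr R) (h\<^sup>2) lam x"
proof -
  have a1: "2 powr (R + 1) = 2 powr R * 2 powr (1::real)"
    by (rule powr_add)
  have a2: "2 powr (1::real) = 2" by simp
  have b1: "2 * R = R + R" by simp
  have b: "2 powr (2 * R) = 2 powr R * (2 powr R::real)"
    unfolding b1 by (rule powr_add)
  show ?thesis unfolding cubic_def a1 a2 b by (rule cubic_aux)
qed

lemma Q_closed:
  assumes P: "prob_space M" and l: "0 < l" and s: "2 powr R > 1"
    and D1: "distributed M lborel G1 (exponential_density l)"
    and D2: "distributed M lborel G2 (exponential_density l)"
    and I: "prob_space.indep_var M borel G1 borel G2"
    and x: "x > 0"
  shows "Qprob M G1 G2 R h x = exp (- l * alpha2 R x) * (1 + l * (alpha2 R x - max (alpha1 R h x) 0))"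
proof -
  have "alpha1 R h x \<le> 2 powr R - 1" using x by (simp add: alpha1_def)
  moreover have "alpha2 R x = 2 powr R - 1 + 2 powr R / x" using x by (simp add: alpha2_def field_simps)
  moreover have "2 powr R / x > 0" using x by simp
  ultimately have le: "max (alpha1 R h x) 0 \<le> alpha2 R x" using s by auto
  show ?thesis unfolding Qprob_def
    by (rule Qformula[OF P l D1 D2 I _ le]) simp
qed

theorem mainTheorem10:
  fixes M :: "'a measure" and G1 G2 :: "'a \<Rightarrow> real" and R h lam :: real
  assumes "prob_space M"
    and "R > 0" and "h > 0" and "lam > 0"
    and "distributed M lborel G1 (exponential_density lam)"
    and "distributed M lborel G2 (exponential_density lam)"
    and "prob_space.indep_var M borel G1 borel G2"
  shows "(\<exists>!d. d > 0 \<and> cubic R h lam d = 0) \<and>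
         (\<forall>d. d > 0 \<and> cubic R h lam d = 0 \<longrightarrow>
            (let ds = max d (delta_t R h) in
               ds > 0 \<and> (\<forall>\<Delta>>0. Qprob M G1 G2 R h \<Delta> \<le> Qprob M G1 G2 R h ds)))"
proof -
  note P = assms(1) and R = assms(2) and hpos = assms(3) and l = assms(4)
    and D1 = assms(5) and D2 = assms(6) and I = assms(7)
  define s where "s = 2 powr R"
  define H where "H = h\<^sup>2"
  have s1: "s > 1" using powr_less_mono[of 0 R 2] R by (simp add: s_def)
  have s0: "s > 0" using s1 by simp
  have H0: "H > 0" using hpos by (simp add: H_def)
  have cub: "\<And>x. cubic R h lam x = Cp s H lam x" by (simp add: cubic_eq s_def H_def)
  have ex1: "\<exists>!d. d > 0 \<and> cubic R h lam d = 0"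
  proof (rule ex_ex1I)
    show "\<exists>d. d > 0 \<and> cubic R h lam d = 0" using Cp_exists[OF s0 H0 l] cub by auto
  next
    fix d1 d2 assume a: "d1 > 0 \<and> cubic R h lam d1 = 0" "d2 > 0 \<and> cubic R h lam d2 = 0"
    show "d1 = d2"
    proof (rule ccontr)
      assume "d1 \<noteq> d2"
      then consider "d1 < d2" | "d2 < d1" by linarith
      then show False
      proof cases
        case 1
        have "Cp s H lam d2 = 0" "Cp s H lam d1 = 0" using a cub by auto
        then show False using Cp_sign(1)[OF s0 H0 _ _ _ 1, of lam] a by auto
      next
        case 2
        have "Cp s H lam d2 = 0" "Cp s H lam d1 = 0" using a cub by auto
        then show False using Cp_sign(1)[OF s0 H0 _ _ _ 2, of lam] a by auto
      qed
    qed
  qed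
  have s1': "2 powr R > 1" using s1 by (simp add: s_def)
  have Qc: "Qprob M G1 G2 R h x = exp (- lam * (s - 1 + s / x)) * (1 + lam * ((s - 1 + s / x) - max (alpha1 R h x) 0))"
    if x: "x > 0" for x
  proof -
    have "alpha2 R x = s - 1 + s / x" using x by (simp add: alpha2_def s_def field_simps)
    then show ?thesis using Q_closed[OF P l s1' D1 D2 I x] by simp
  qed
  have dt: "delta_t R h = H / (s - 1) - 1" by (simp add: delta_t_def s_def H_def)
  have a1: "alpha1 R h x = s - H / (1 + x) - 1" for x by (simp add: alpha1_def s_def H_def)
  have QA: "Qprob M G1 G2 R h x = psiF s H lam x" if x: "x > 0" and xt: "delta_t R h \<le> x" for x
  proof -
    have "H / (s - 1) \<le> 1 + x" using xt dt by simp
    then have "H \<le> (1 + x) * (s - 1)" using s1 by (simp add: divide_le_eq)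
    then have "H / (1 + x) \<le> s - 1" using x by (simp add: divide_le_eq mult.commute)
    then have "max (alpha1 R h x) 0 = s - H / (1 + x) - 1" using a1 by simp
    then show ?thesis using Qc[OF x] by (simp add: psiF_def)
  qed
  have QB: "Qprob M G1 G2 R h x = phiF lam (s - 1 + s / x)" if x: "x > 0" and xt: "x \<le> delta_t R h" for x
  proof -
    have "1 + x \<le> H / (s - 1)" using xt dt by simp
    then have "(1 + x) * (s - 1) \<le> H" using s1 by (simp add: le_divide_eq)
    then have "s - 1 \<le> H / (1 + x)" using x by (simp add: le_divide_eq mult.commute)
    then have "max (alpha1 R h x) 0 = 0" using a1 by simp
    then show ?thesis using Qc[OF x] by (simp add: phiF_def)
  qed
  have main: "let ds = max d (delta_t R h) in
               ds > 0 \<and> (\<forall>\<Delta>>0. Qprob M G1 G2 R h \<Delta> \<le> Qprob M G1 G2 R h ds)"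
    if d: "d > 0" "cubic R h lam d = 0" for d
  proof -
    have dC: "Cp s H lam d = 0" using d cub by simp
    define t where "t = delta_t R h"
    define ds where "ds = max d t"
    have ds0: "ds > 0" using d by (simp add: ds_def)
    have "Qprob M G1 G2 R h x \<le> Qprob M G1 G2 R h ds" if x: "x > 0" for x
    proof (cases "x \<le> t")
      case True
      then have t0: "t > 0" using x by simp
      have "Qprob M G1 G2 R h x = phiF lam (s - 1 + s / x)" using QB[OF x] True t_def by simp
      also have "\<dots> \<le> phiF lam (s - 1 + s / t)"
      proof (rule phiF_dec[OF l])
        show "0 \<le> s - 1 + s / t" using s1 t0 by simp
        show "s - 1 + s / t \<le> s - 1 + s / x" using x True s0 by (simp add: frac_le)
      qed
      also have "\<dots> = Qprob M G1 G2 R h t" using QB[OF t0] t_def by simp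
      also have "\<dots> = psiF s H lam t" using QA[OF t0] t_def by simp
      also have "\<dots> \<le> Qprob M G1 G2 R h ds"
      proof (cases "d \<le> t")
        case True
        then have "ds = t" by (simp add: ds_def)
        then show ?thesis using QA[OF t0] t_def by simp
      next
        case False
        then have "ds = d" by (simp add: ds_def)
        moreover have "psiF s H lam t \<le> psiF s H lam d"
          using psiF_inc[OF l s0 H0 d(1) dC t0] False by simp
        moreover have "Qprob M G1 G2 R h d = psiF s H lam d" using QA[OF d(1)] False t_def by simp
        ultimately show ?thesis by simp
      qed
      finally show ?thesis .
    next
      case False
      have Qx: "Qprob M G1 G2 R h x = psiF s H lam x" using QA[OF x] False t_def by simp
      have Qds: "Qprob M G1 G2 R h ds = psiF s H lam ds" using QA[OF ds0] t_def by (simp add: ds_def)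
      show ?thesis
      proof (cases "t \<le> d")
        case True
        then have dsd: "ds = d" by (simp add: ds_def)
        show ?thesis
        proof (cases "x \<le> d")
          case True then show ?thesis
            using psiF_inc[OF l s0 H0 d(1) dC x True] Qx Qds dsd by simp
        next
          case False then show ?thesis
            using psiF_dec[OF l s0 H0 d(1) dC, of d x] Qx Qds dsd by simp
        qed
      next
        case c2: False
        then have dst: "ds = t" by (simp add: ds_def)
        show ?thesis
          using psiF_dec[OF l s0 H0 d(1) dC, of t x] Qx Qds dst c2 False by simp
      qed
    qed
    then show ?thesis using ds0 unfolding ds_def t_def Let_def by blast
  qed
  show ?thesis using ex1 main by blast
qed

end
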